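(* Every $\alpha$-pairing can be transformed by the moves $M_1,M_2$ into a primitive $\alpha$-pairing. Two homologous primitive $\alpha$-pairings are isomorphic.
   Context: Fix a set $\alpha$ with an involution $\tau$, and let $\pi$ be the multiplicative abelian group generated by the elements of $\alpha$ with relations $a\,\tau(a)=1$. A pairing $b:S\times S\to\pi$ is skew-symmetric if $b(A,B)=b(B,A)^{-1}$ and $b(A,A)=1$ for all $A,B$. An $\alpha$-pairing is a triple $(S,s,b)$: a set $S$ with a distinguished element $s\in S$, a map $S\setminus\{s\}\to\alpha$, $A\mapsto|A|$, and a skew-symmetric pairing $b:S\times S\to\pi$. Two $\alpha$-pairings $(S,s,b),(S',s',b')$ are isomorphic if there is a bijection $S\to S'$ sending $s$ to $s'$, preserving $|\cdot|$ on $S\setminus\{s\}$, and carrying $b$ to $b'$. An element $A\in S\setminus\{s\}$ is annihilating if $b(A,C)=1$ for all $C\in S$. Elements $A,B\in S\setminus\{s\}$ are twins if $|A|=\tau(|B|)$ and $b(A,C)=b(B,C)$ for all $C\in S$. Move $M_1$ deletes an annihilating element $A$, replacing $(S,s,b)$ by $(S\setminus\{A\},s,b|)$; move $M_2$ deletes a pair of twins $A,B$, replacing $(S,s,b)$ by $(S\setminus\{A,B\},s,b|)$. Two $\alpha$-pairings are homologous if they are related by a finite sequence of moves $M_1,M_2$, their inverses, and isomorphisms. An $\alpha$-pairing is primitive if it has no annihilating elements and no pairs of twins. *)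

theory Defs
  imports Main "HOL-Library.Poly_Mapping"
begin

text \<open>The group pi: written additively. Elements are represented by the free abelian
group on the alphabet type 'a (finitely supported maps 'a to int); two representatives
denote the same element of pi iff their difference lies in the subgroup generated by
the relators a + tau(a). The unit 1 of pi corresponds to 0, inverse to negation.\<close>

inductive_set pi_rels :: "('a \<Rightarrow> 'a) \<Rightarrow> ('a \<Rightarrow>\<^sub>0 int) set" for \<tau> :: "'a \<Rightarrow> 'a" where
  zero: "0 \<in> pi_rels \<tau>"
| add: "x \<in> pi_rels \<tau> \<Longrightarrow> x + (Poly_Mapping.single a 1 + Poly_Mapping.single (\<tau> a) 1) \<in> pi_rels \<tau>"
| sub: "x \<in> pi_rels \<tau> \<Longrightarrow> x - (Poly_Mapping.single a 1 + Poly_Mapping.single (\<tau> a) 1) \<in> pi_rels \<tau>"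

definition pi_eq :: "('a \<Rightarrow> 'a) \<Rightarrow> ('a \<Rightarrow>\<^sub>0 int) \<Rightarrow> ('a \<Rightarrow>\<^sub>0 int) \<Rightarrow> bool" where
  "pi_eq \<tau> x y \<longleftrightarrow> x - y \<in> pi_rels \<tau>"

text \<open>An alpha-pairing (S, s, |.|, b): carrier S, distinguished element s,
labelling |.| (relevant on S - {s}), pairing b (relevant on S x S).\<close>

type_synonym ('x, 'a) apairing = "'x set \<times> 'x \<times> ('x \<Rightarrow> 'a) \<times> ('x \<Rightarrow> 'x \<Rightarrow> ('a \<Rightarrow>\<^sub>0 int))"

fun is_apairing :: "('a \<Rightarrow> 'a) \<Rightarrow> ('x, 'a) apairing \<Rightarrow> bool" where
  "is_apairing \<tau> (S, s, l, b) \<longleftrightarrow> finite S \<and> s \<in> S \<and>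
     (\<forall>A\<in>S. \<forall>B\<in>S. pi_eq \<tau> (b A B) (- b B A)) \<and>
     (\<forall>A\<in>S. pi_eq \<tau> (b A A) 0)"

fun apairing_iso :: "('a \<Rightarrow> 'a) \<Rightarrow> ('x, 'a) apairing \<Rightarrow> ('x, 'a) apairing \<Rightarrow> bool" where
  "apairing_iso \<tau> (S, s, l, b) (S', s', l', b') \<longleftrightarrow>
     (\<exists>f. bij_betw f S S' \<and> f s = s' \<and> (\<forall>A\<in>S - {s}. l' (f A) = l A) \<and>
          (\<forall>A\<in>S. \<forall>B\<in>S. pi_eq \<tau> (b' (f A) (f B)) (b A B)))"

fun annihilating :: "('a \<Rightarrow> 'a) \<Rightarrow> ('x, 'a) apairing \<Rightarrow> 'x \<Rightarrow> bool" where
  "annihilating \<tau> (S, s, l, b) A \<longleftrightarrow> A \<in> S - {s} \<and> (\<forall>C\<in>S. pi_eq \<tau> (b A C) 0)"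

fun twins :: "('a \<Rightarrow> 'a) \<Rightarrow> ('x, 'a) apairing \<Rightarrow> 'x \<Rightarrow> 'x \<Rightarrow> bool" where
  "twins \<tau> (S, s, l, b) A B \<longleftrightarrow> A \<in> S - {s} \<and> B \<in> S - {s} \<and> A \<noteq> B \<and>
     l A = \<tau> (l B) \<and> (\<forall>C\<in>S. pi_eq \<tau> (b A C) (b B C))"

fun move_M1 :: "('a \<Rightarrow> 'a) \<Rightarrow> ('x, 'a) apairing \<Rightarrow> ('x, 'a) apairing \<Rightarrow> bool" where
  "move_M1 \<tau> (S, s, l, b) Q \<longleftrightarrow>
     (\<exists>A. annihilating \<tau> (S, s, l, b) A \<and> Q = (S - {A}, s, l, b))"

fun move_M2 :: "('a \<Rightarrow> 'a) \<Rightarrow> ('x, 'a) apairing \<Rightarrow> ('x, 'a) apairing \<Rightarrow> bool" where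
  "move_M2 \<tau> (S, s, l, b) Q \<longleftrightarrow>
     (\<exists>A B. twins \<tau> (S, s, l, b) A B \<and> Q = (S - {A, B}, s, l, b))"

definition apairing_move :: "('a \<Rightarrow> 'a) \<Rightarrow> ('x, 'a) apairing \<Rightarrow> ('x, 'a) apairing \<Rightarrow> bool" where
  "apairing_move \<tau> P Q \<longleftrightarrow> move_M1 \<tau> P Q \<or> move_M2 \<tau> P Q"

definition primitive :: "('a \<Rightarrow> 'a) \<Rightarrow> ('x, 'a) apairing \<Rightarrow> bool" where
  "primitive \<tau> P \<longleftrightarrow> (\<nexists>A. annihilating \<tau> P A) \<and> (\<nexists>A B. twins \<tau> P A B)"

definition homology_step :: "('a \<Rightarrow> 'a) \<Rightarrow> ('x, 'a) apairing \<Rightarrow> ('x, 'a) apairing \<Rightarrow> bool" where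
  "homology_step \<tau> P Q \<longleftrightarrow> is_apairing \<tau> P \<and> is_apairing \<tau> Q \<and>
     (apairing_move \<tau> P Q \<or> apairing_move \<tau> Q P \<or> apairing_iso \<tau> P Q)"

definition homologous :: "('a \<Rightarrow> 'a) \<Rightarrow> ('x, 'a) apairing \<Rightarrow> ('x, 'a) apairing \<Rightarrow> bool" where
  "homologous \<tau> = (homology_step \<tau>)\<^sup>*\<^sup>*"

end

theory Submission
  imports Defs
begin

lemma pi_rels_add: "y \<in> pi_rels t \<Longrightarrow> x \<in> pi_rels t \<Longrightarrow> x + y \<in> pi_rels t"
proof (induction y rule: pi_rels.induct)
  case zero then show ?case by simp
next
  case (add y a)
  have "x + (y + r) = (x + y) + r" for r :: "'a \<Rightarrow>\<^sub>0 int" by (simp add: add.assoc)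
  then show ?case using add pi_rels.add by metis
next
  case (sub y a)
  have "x + (y - r) = (x + y) - r" for r :: "'a \<Rightarrow>\<^sub>0 int" by (simp add: algebra_simps)
  then show ?case using sub pi_rels.sub by metis
qed

lemma pi_rels_neg: "x \<in> pi_rels t \<Longrightarrow> - x \<in> pi_rels t"
proof (induction rule: pi_rels.induct)
  case zero then show ?case by (simp add: pi_rels.zero)
next
  case (add x a)
  have "- (x + r) = (- x) - r" for r :: "'a \<Rightarrow>\<^sub>0 int" by (simp add: algebra_simps)
  then show ?case using add pi_rels.sub by metis
next
  case (sub x a)
  have "- (x - r) = (- x) + r" for r :: "'a \<Rightarrow>\<^sub>0 int" by (simp add: algebra_simps)
  then show ?case using sub pi_rels.add by metis
qed

lemma pi_eq_refl: "pi_eq t x x"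
  by (simp add: pi_eq_def pi_rels.zero)

lemma pi_eq_sym: "pi_eq t x y \<Longrightarrow> pi_eq t y x"
proof -
  assume "pi_eq t x y"
  then have "- (x - y) \<in> pi_rels t" unfolding pi_eq_def by (rule pi_rels_neg)
  moreover have "- (x - y) = y - x" by simp
  ultimately show ?thesis unfolding pi_eq_def by simp
qed

lemma pi_eq_trans: "pi_eq t x y \<Longrightarrow> pi_eq t y z \<Longrightarrow> pi_eq t x z"
proof -
  assume "pi_eq t x y" "pi_eq t y z"
  then have "(x - y) + (y - z) \<in> pi_rels t" unfolding pi_eq_def by (intro pi_rels_add)
  moreover have "(x - y) + (y - z) = x - z" by simp
  ultimately show ?thesis unfolding pi_eq_def by simp
qed

lemma pi_eq_neg: "pi_eq t x y \<Longrightarrow> pi_eq t (- x) (- y)"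
proof -
  assume "pi_eq t x y"
  then have "- (x - y) \<in> pi_rels t" unfolding pi_eq_def by (rule pi_rels_neg)
  moreover have "- (x - y) = (- x) - (- y)" by simp
  ultimately show ?thesis unfolding pi_eq_def by simp
qed

lemma isoI:
  assumes "bij_betw f S S'" "f s = s'" "\<forall>A\<in>S - {s}. l' (f A) = l A"
    "\<forall>A\<in>S. \<forall>B\<in>S. pi_eq t (b' (f A) (f B)) (b A B)"
  shows "apairing_iso t (S, s, l, b) (S', s', l', b')"
  using assms by (simp only: apairing_iso.simps) blast

lemma isoE:
  assumes "apairing_iso t (S, s, l, b) (S', s', l', b')"
  obtains f where "bij_betw f S S'" "f s = s'" "\<forall>A\<in>S - {s}. l' (f A) = l A"
    "\<forall>A\<in>S. \<forall>B\<in>S. pi_eq t (b' (f A) (f B)) (b A B)"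
  using assms by (simp only: apairing_iso.simps) blast

lemma iso_refl: "apairing_iso t P P"
proof -
  obtain S s l b where P: "P = (S, s, l, b)" by (cases P)
  have "bij_betw id S S" by simp
  then show ?thesis unfolding P by (rule isoI) (auto simp: pi_eq_refl)
qed

lemma iso_sym:
  assumes "is_apairing t P" "apairing_iso t P Q"
  shows "apairing_iso t Q P"
proof -
  obtain S s l b where P: "P = (S, s, l, b)" by (cases P)
  obtain S' s' l' b' where Q: "Q = (S', s', l', b')" by (cases Q)
  have sS: "s \<in> S" using assms(1) unfolding P by simp
  obtain f where f: "bij_betw f S S'" "f s = s'" "\<forall>A\<in>S - {s}. l' (f A) = l A"
    "\<forall>A\<in>S. \<forall>B\<in>S. pi_eq t (b' (f A) (f B)) (b A B)"
    using assms unfolding P Q by (elim isoE)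
  define g where "g = inv_into S f"
  have g: "bij_betw g S' S" unfolding g_def using f(1) by (rule bij_betw_inv_into)
  have fg: "f (g x) = x" if "x \<in> S'" for x
    unfolding g_def using f(1) that by (simp add: bij_betw_def f_inv_into_f)
  have gS: "g x \<in> S" if "x \<in> S'" for x using g that by (rule bij_betw_apply)
  have gs: "g s' = s" unfolding g_def using f sS by (metis bij_betw_def inv_into_f_f)
  have "\<forall>A\<in>S' - {s'}. l (g A) = l' A"
  proof
    fix A assume A: "A \<in> S' - {s'}"
    then have "g A \<noteq> s" using fg f(2) by force
    then show "l (g A) = l' A" using f(3) gS fg A by force
  qed
  moreover have "\<forall>A\<in>S'. \<forall>B\<in>S'. pi_eq t (b (g A) (g B)) (b' A B)"
  proof (intro ballI)
    fix A B assume AB: "A \<in> S'" "B \<in> S'"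
    have "pi_eq t (b' (f (g A)) (f (g B))) (b (g A) (g B))" using f(4) gS AB by blast
    then show "pi_eq t (b (g A) (g B)) (b' A B)" using fg AB pi_eq_sym by simp
  qed
  ultimately show ?thesis unfolding P Q using g gs by (intro isoI)
qed

lemma iso_trans:
  assumes "is_apairing t P" "apairing_iso t P Q" "apairing_iso t Q R"
  shows "apairing_iso t P R"
proof -
  obtain S s l b where P: "P = (S, s, l, b)" by (cases P)
  obtain S' s' l' b' where Q: "Q = (S', s', l', b')" by (cases Q)
  obtain S'' s'' l'' b'' where R: "R = (S'', s'', l'', b'')" by (cases R)
  have sS: "s \<in> S" using assms(1) unfolding P by simp
  obtain f where f: "bij_betw f S S'" "f s = s'" "\<forall>A\<in>S - {s}. l' (f A) = l A"
    "\<forall>A\<in>S. \<forall>B\<in>S. pi_eq t (b' (f A) (f B)) (b A B)"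
    using assms unfolding P Q by (elim isoE)
  obtain g where g: "bij_betw g S' S''" "g s' = s''" "\<forall>A\<in>S' - {s'}. l'' (g A) = l' A"
    "\<forall>A\<in>S'. \<forall>B\<in>S'. pi_eq t (b'' (g A) (g B)) (b' A B)"
    using assms unfolding R Q by (elim isoE)
  have fS: "f x \<in> S'" if "x \<in> S" for x using f(1) that by (rule bij_betw_apply)
  have "bij_betw (g \<circ> f) S S''" using f(1) g(1) bij_betw_trans by blast
  moreover have "(g \<circ> f) s = s''" using f g by simp
  moreover have "\<forall>A\<in>S - {s}. l'' ((g \<circ> f) A) = l A"
  proof
    fix A assume A: "A \<in> S - {s}"
    then have "f A \<noteq> s'" using f(1,2) sS by (metis DiffE bij_betw_def inj_on_def singletonI)
    then show "l'' ((g \<circ> f) A) = l A" using A f(3) g(3) fS by auto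
  qed
  moreover have "\<forall>A\<in>S. \<forall>B\<in>S. pi_eq t (b'' ((g \<circ> f) A) ((g \<circ> f) B)) (b A B)"
  proof (intro ballI)
    fix A B assume AB: "A \<in> S" "B \<in> S"
    have "pi_eq t (b'' (g (f A)) (g (f B))) (b' (f A) (f B))" using g(4) fS AB by blast
    moreover have "pi_eq t (b' (f A) (f B)) (b A B)" using f(4) AB by blast
    ultimately show "pi_eq t (b'' ((g \<circ> f) A) ((g \<circ> f) B)) (b A B)"
      using pi_eq_trans by simp
  qed
  ultimately show ?thesis unfolding P R by (intro isoI)
qed

lemma m1I: "annihilating t (S, s, l, b) A \<Longrightarrow> T = S - {A} \<Longrightarrow> apairing_move t (S, s, l, b) (T, s, l, b)"
  unfolding apairing_move_def by auto

lemma m2I: "twins t (S, s, l, b) A B \<Longrightarrow> T = S - {A, B} \<Longrightarrow> apairing_move t (S, s, l, b) (T, s, l, b)"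
  unfolding apairing_move_def by (auto simp del: twins.simps)

lemma move_cases:
  assumes "apairing_move t (S, s, l, b) Q"
  obtains A where "annihilating t (S, s, l, b) A" "Q = (S - {A}, s, l, b)"
  | A B where "twins t (S, s, l, b) A B" "Q = (S - {A, B}, s, l, b)"
  using assms unfolding apairing_move_def
  by (auto simp del: twins.simps annihilating.simps)

lemma move_apairing:
  assumes "is_apairing t P" "apairing_move t P Q"
  shows "is_apairing t Q \<and> card (fst Q) < card (fst P)"
proof -
  obtain S s l b where P: "P = (S, s, l, b)" by (cases P)
  have "apairing_move t (S, s, l, b) Q" using assms(2) P by simp
  then show ?thesis
  proof (cases rule: move_cases)
    case (1 A)
    have "card (S - {A}) < card S" using 1 assms(1) unfolding P by (intro card_Diff1_less) auto
    then show ?thesis using 1 assms(1) unfolding P by (auto simp del: card_Diff_insert)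
  next
    case (2 A B)
    then have "card (S - {A, B}) < card S" using assms(1) unfolding P
      by (intro psubset_card_mono) auto
    then show ?thesis using 2 assms(1) unfolding P by auto
  qed
qed

lemma moves_apairing:
  "(apairing_move t)\<^sup>*\<^sup>* P Q \<Longrightarrow> is_apairing t P \<Longrightarrow> is_apairing t Q"
  by (induction rule: rtranclp_induct) (auto dest: move_apairing)

lemma primitive_iff: "primitive t P \<longleftrightarrow> \<not> (\<exists>Q. apairing_move t P Q)"
proof -
  obtain S s l b where P: "P = (S, s, l, b)" by (cases P)
  show ?thesis
  proof
    assume "primitive t P"
    then show "\<not> (\<exists>Q. apairing_move t P Q)" unfolding P primitive_def
      by (auto elim!: move_cases simp del: twins.simps annihilating.simps)
  next
    assume "\<not> (\<exists>Q. apairing_move t P Q)"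
    then have "\<not> annihilating t (S, s, l, b) A" "\<not> twins t (S, s, l, b) A B" for A B
      using m1I[of t S s l b A "S - {A}"] m2I[of t S s l b A B "S - {A, B}"] unfolding P by blast+
    then show "primitive t P" unfolding P primitive_def by blast
  qed
qed

lemma exists_primitive:
  "is_apairing t P \<Longrightarrow> \<exists>Q. (apairing_move t)\<^sup>*\<^sup>* P Q \<and> primitive t Q"
proof (induction "card (fst P)" arbitrary: P rule: less_induct)
  case less
  show ?case
  proof (cases "primitive t P")
    case True then show ?thesis by blast
  next
    case False
    then obtain P' where P': "apairing_move t P P'" using primitive_iff by blast
    then have "is_apairing t P'" "card (fst P') < card (fst P)"
      using move_apairing less.prems by blast+
    then obtain Q where "(apairing_move t)\<^sup>*\<^sup>* P' Q" "primitive t Q" using less.hyps by blast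
    then show ?thesis using P' converse_rtranclp_into_rtranclp by metis
  qed
qed

section \<open>Transfer of moves along isomorphisms\<close>

lemma iso_move:
  assumes "is_apairing t P" "apairing_iso t P P'" "apairing_move t P Q"
  shows "\<exists>Q'. apairing_move t P' Q' \<and> apairing_iso t Q Q'"
proof -
  obtain S s l b where P: "P = (S, s, l, b)" by (cases P)
  obtain S' s' l' b' where P': "P' = (S', s', l', b')" by (cases P')
  have sS: "s \<in> S" using assms(1) unfolding P by simp
  obtain f where f: "bij_betw f S S'" "f s = s'" "\<forall>A\<in>S - {s}. l' (f A) = l A"
    "\<forall>A\<in>S. \<forall>B\<in>S. pi_eq t (b' (f A) (f B)) (b A B)"
    using assms unfolding P P' by (elim isoE)
  have fS: "f x \<in> S'" if "x \<in> S" for x using f(1) that by (rule bij_betw_apply)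
  have finj: "f x = f y \<longleftrightarrow> x = y" if "x \<in> S" "y \<in> S" for x y
    using f(1) that unfolding bij_betw_def inj_on_def by blast
  have allS': "\<forall>C\<in>S'. \<exists>C0\<in>S. C = f C0" using f(1) unfolding bij_betw_def by blast
  have restr: "apairing_iso t (S - X, s, l, b) (S' - f ` X, s', l', b')" if X: "X \<subseteq> S - {s}" for X
  proof -
    have "bij_betw f (S - X) (S' - f ` X)"
      using f(1) X by (intro bij_betw_DiffI) (auto simp: bij_betw_def intro: inj_on_subset)
    moreover have "\<forall>A\<in>S - X - {s}. l' (f A) = l A" using f(3) by auto
    moreover have "\<forall>A\<in>S - X. \<forall>B\<in>S - X. pi_eq t (b' (f A) (f B)) (b A B)" using f(4) by auto
    ultimately show ?thesis using f(2) by (intro isoI)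
  qed
  have "apairing_move t (S, s, l, b) Q" using assms(3) P by simp
  then show ?thesis
  proof (cases rule: move_cases)
    case (1 A)
    have A: "A \<in> S" "A \<noteq> s" and Ab: "\<forall>C\<in>S. pi_eq t (b A C) 0"
      using 1(1) unfolding annihilating.simps by blast+
    have ann: "annihilating t (S', s', l', b') (f A)"
    proof -
      have "pi_eq t (b' (f A) C) 0" if "C \<in> S'" for C
      proof -
        have "\<exists>C0\<in>S. C = f C0" using allS' that by (rule bspec)
        then obtain C0 where C0: "C0 \<in> S" "C = f C0" by (rule bexE)
        have "pi_eq t (b' (f A) (f C0)) (b A C0)" using f(4) A(1) C0(1) by blast
        moreover have "pi_eq t (b A C0) 0" using Ab C0(1) by blast
        ultimately show ?thesis unfolding C0(2) by (rule pi_eq_trans)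
      qed
      moreover have "f A \<noteq> s'" using finj[OF A(1) sS] A(2) f(2) by simp
      ultimately show ?thesis using fS A by auto
    qed
    have "apairing_iso t (S - {A}, s, l, b) (S' - f ` {A}, s', l', b')"
      by (rule restr) (use A in auto)
    then have iso: "apairing_iso t Q (S' - {f A}, s', l', b')"
      using 1(2) by (simp del: apairing_iso.simps)
    have "apairing_move t P' (S' - {f A}, s', l', b')" unfolding P' using ann by (rule m1I) simp
    then show ?thesis using iso by blast
  next
    case (2 A B)
    have A: "A \<in> S" "A \<noteq> s" "B \<in> S" "B \<noteq> s" "A \<noteq> B" "l A = t (l B)"
      and Ab: "\<forall>C\<in>S. pi_eq t (b A C) (b B C)"
      using 2(1) unfolding twins.simps by blast+
    have tw: "twins t (S', s', l', b') (f A) (f B)"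
    proof -
      have "pi_eq t (b' (f A) C) (b' (f B) C)" if "C \<in> S'" for C
      proof -
        have "\<exists>C0\<in>S. C = f C0" using allS' that by (rule bspec)
        then obtain C0 where C0: "C0 \<in> S" "C = f C0" by (rule bexE)
        have "pi_eq t (b' (f A) (f C0)) (b A C0)" using f(4) A(1) C0(1) by blast
        moreover have "pi_eq t (b A C0) (b B C0)" using Ab C0(1) by blast
        moreover have "pi_eq t (b' (f B) (f C0)) (b B C0)" using f(4) A(3) C0(1) by blast
        then have "pi_eq t (b B C0) (b' (f B) (f C0))" by (rule pi_eq_sym)
        ultimately show ?thesis unfolding C0(2) by (meson pi_eq_trans)
      qed
      moreover have "f A \<noteq> s'" using finj[OF A(1) sS] A(2) f(2) by simp
      moreover have "f B \<noteq> s'" using finj[OF A(3) sS] A(4) f(2) by simp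
      moreover have "f A \<noteq> f B" using finj[OF A(1) A(3)] A(5) by simp
      moreover have "l' (f A) = t (l' (f B))" using f(3) A by auto
      ultimately show ?thesis using fS A by auto
    qed
    have "apairing_iso t (S - {A, B}, s, l, b) (S' - f ` {A, B}, s', l', b')"
      by (rule restr) (use A in auto)
    then have iso: "apairing_iso t Q (S' - {f A, f B}, s', l', b')"
      using 2(2) by (simp del: apairing_iso.simps)
    have "apairing_move t P' (S' - {f A, f B}, s', l', b')" unfolding P' using tw by (rule m2I) simp
    then show ?thesis using iso by blast
  qed
qed

lemma iso_moves:
  assumes "(apairing_move t)\<^sup>*\<^sup>* P Q" "is_apairing t P" "apairing_iso t P P'"
  shows "\<exists>Q'. (apairing_move t)\<^sup>*\<^sup>* P' Q' \<and> apairing_iso t Q Q'"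
  using assms
proof (induction rule: rtranclp_induct)
  case base then show ?case by (intro exI[of _ P']) simp
next
  case (step Q R)
  then obtain Q' where Q': "(apairing_move t)\<^sup>*\<^sup>* P' Q'" "apairing_iso t Q Q'" by blast
  have "is_apairing t Q" using step moves_apairing by blast
  then obtain R' where "apairing_move t Q' R'" "apairing_iso t R R'"
    using iso_move Q'(2) step.hyps(2) by blast
  then show ?case using Q'(1) by (meson rtranclp.rtrancl_into_rtrancl)
qed

lemma iso_primitive:
  assumes "is_apairing t P" "is_apairing t P'" "apairing_iso t P P'" "primitive t P"
  shows "primitive t P'"
proof -
  have "\<not> apairing_move t P' Q'" for Q'
  proof
    assume "apairing_move t P' Q'"
    moreover have "apairing_iso t P' P" using iso_sym assms by blast
    ultimately obtain Q where "apairing_move t P Q" using iso_move assms(2) by blast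
    then show False using assms(4) primitive_iff by blast
  qed
  then show ?thesis using primitive_iff by blast
qed


section \<open>Local confluence\<close>

lemma ann_sub: "annihilating t (S, s, l, b) A \<Longrightarrow> A \<in> T \<Longrightarrow> T \<subseteq> S \<Longrightarrow> annihilating t (T, s, l, b) A"
  by auto

lemma twins_sub: "twins t (S, s, l, b) A B \<Longrightarrow> A \<in> T \<Longrightarrow> B \<in> T \<Longrightarrow> T \<subseteq> S \<Longrightarrow> twins t (T, s, l, b) A B"
  by auto

lemma m1I': "annihilating t (S, s, l, b) A \<Longrightarrow> A \<in> T \<Longrightarrow> T \<subseteq> S \<Longrightarrow> U = T - {A} \<Longrightarrow>
  apairing_move t (T, s, l, b) (U, s, l, b)"
  by (rule m1I, rule ann_sub)

lemma m2I': "twins t (S, s, l, b) A B \<Longrightarrow> A \<in> T \<Longrightarrow> B \<in> T \<Longrightarrow> T \<subseteq> S \<Longrightarrow> U = T - {A, B} \<Longrightarrow>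
  apairing_move t (T, s, l, b) (U, s, l, b)"
  by (rule m2I, rule twins_sub)

lemma twins_sym:
  assumes inv: "\<And>a. t (t a) = a" and tw: "twins t (S, s, l, b) A B"
  shows "twins t (S, s, l, b) B A"
proof -
  have h: "A \<in> S - {s}" "B \<in> S - {s}" "A \<noteq> B" "l A = t (l B)" "\<forall>C\<in>S. pi_eq t (b A C) (b B C)"
    using tw by simp_all
  have "l B = t (l A)" using h(4) inv by simp
  moreover have "\<forall>C\<in>S. pi_eq t (b B C) (b A C)" using h(5) pi_eq_sym by blast
  ultimately show ?thesis using h(1-3) by simp
qed

lemma twin_ann:
  assumes an: "annihilating t (S, s, l, b) A" and tw: "\<forall>X\<in>S. pi_eq t (b C X) (b A X)"
    and C: "C \<in> S" "C \<noteq> s" "C \<noteq> A"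
  shows "annihilating t (S - {A}, s, l, b) C"
proof -
  have "pi_eq t (b C X) 0" if "X \<in> S" for X
  proof -
    have "pi_eq t (b A X) 0" using an that by simp
    then show ?thesis using tw that pi_eq_trans by blast
  qed
  then show ?thesis using C by simp
qed

lemma conf_11:
  assumes h1: "annihilating t (S, s, l, b) A" and h2: "annihilating t (S, s, l, b) A'"
  shows "\<exists>Q. (apairing_move t)\<^sup>*\<^sup>* (S - {A}, s, l, b) Q \<and> (apairing_move t)\<^sup>*\<^sup>* (S - {A'}, s, l, b) Q"
proof (cases "A = A'")
  case True then show ?thesis by blast
next
  case False
  have "apairing_move t (S - {A}, s, l, b) (S - {A} - {A'}, s, l, b)"
    by (rule m1I'[OF h2]) (use h2 False in auto)
  moreover have "apairing_move t (S - {A'}, s, l, b) (S - {A} - {A'}, s, l, b)"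
    by (rule m1I'[OF h1]) (use h1 False in auto)
  ultimately show ?thesis by blast
qed

lemma conf_12:
  assumes h1: "annihilating t (S, s, l, b) A" and h2: "twins t (S, s, l, b) B C"
  shows "\<exists>Q. (apairing_move t)\<^sup>*\<^sup>* (S - {A}, s, l, b) Q \<and> (apairing_move t)\<^sup>*\<^sup>* (S - {B, C}, s, l, b) Q"
proof -
  have tw: "B \<in> S" "B \<noteq> s" "C \<in> S" "C \<noteq> s" "B \<noteq> C" "\<forall>X\<in>S. pi_eq t (b B X) (b C X)"
    using h2 by simp_all
  have aS: "A \<in> S" "A \<noteq> s" using h1 by simp_all
  consider "A = B" | "A = C" | "A \<noteq> B \<and> A \<noteq> C" by blast
  then show ?thesis
  proof cases
    case 1
    have "\<forall>X\<in>S. pi_eq t (b C X) (b A X)" using tw(6) 1 pi_eq_sym by blast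
    then have "annihilating t (S - {A}, s, l, b) C" using twin_ann[OF h1] tw 1 by blast
    then have "apairing_move t (S - {A}, s, l, b) (S - {A} - {C}, s, l, b)" by (rule m1I) simp
    then have "(apairing_move t)\<^sup>*\<^sup>* (S - {A}, s, l, b) (S - {A} - {C}, s, l, b)" by (rule r_into_rtranclp)
    moreover have "S - {B, C} = S - {A} - {C}" using 1 by auto
    ultimately show ?thesis by (intro exI[of _ "(S - {A} - {C}, s, l, b)"]) simp
  next
    case 2
    have "\<forall>X\<in>S. pi_eq t (b B X) (b A X)" using tw(6) 2 by blast
    then have "annihilating t (S - {A}, s, l, b) B" using twin_ann[OF h1] tw 2 by blast
    then have "apairing_move t (S - {A}, s, l, b) (S - {A} - {B}, s, l, b)" by (rule m1I) simp
    then have "(apairing_move t)\<^sup>*\<^sup>* (S - {A}, s, l, b) (S - {A} - {B}, s, l, b)" by (rule r_into_rtranclp)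
    moreover have "S - {B, C} = S - {A} - {B}" using 2 by auto
    ultimately show ?thesis by (intro exI[of _ "(S - {A} - {B}, s, l, b)"]) simp
  next
    case 3
    have "apairing_move t (S - {A}, s, l, b) (S - {A} - {B, C}, s, l, b)"
      by (rule m2I'[OF h2]) (use tw 3 in auto)
    moreover have "apairing_move t (S - {B, C}, s, l, b) (S - {A} - {B, C}, s, l, b)"
      by (rule m1I'[OF h1]) (use aS 3 in auto)
    ultimately show ?thesis by blast
  qed
qed

lemma swap_iso:
  assumes inv: "\<And>a. t (t a) = a" and P: "is_apairing t (S, s, l, b)"
    and h1: "twins t (S, s, l, b) X Y" and h2: "twins t (S, s, l, b) X Z" and YZ: "Y \<noteq> Z"
  shows "apairing_iso t (S - {X, Y}, s, l, b) (S - {X, Z}, s, l, b)"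
proof -
  have t1: "X \<in> S" "X \<noteq> s" "Y \<in> S" "Y \<noteq> s" "X \<noteq> Y" "l X = t (l Y)" "\<forall>C\<in>S. pi_eq t (b X C) (b Y C)"
    using h1 by simp_all
  have t2: "Z \<in> S" "Z \<noteq> s" "X \<noteq> Z" "l X = t (l Z)" "\<forall>C\<in>S. pi_eq t (b X C) (b Z C)"
    using h2 by simp_all
  have skew: "\<forall>A\<in>S. \<forall>B\<in>S. pi_eq t (b A B) (- b B A)" and diag: "\<forall>A\<in>S. pi_eq t (b A A) 0"
    using P by simp_all
  have lYZ: "l Y = l Z"
  proof -
    have "t (l X) = l Y" using t1(6) inv by simp
    moreover have "t (l X) = l Z" using t2(4) inv by simp
    ultimately show ?thesis by simp
  qed
  have row: "pi_eq t (b Y C) (b Z C)" if "C \<in> S" for C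
  proof -
    have "pi_eq t (b Y C) (b X C)" using t1(7) that pi_eq_sym by blast
    moreover have "pi_eq t (b X C) (b Z C)" using t2(5) that by blast
    ultimately show ?thesis by (rule pi_eq_trans)
  qed
  have col: "pi_eq t (b C Y) (b C Z)" if "C \<in> S" for C
  proof -
    have "pi_eq t (b C Y) (- b Y C)" using skew that t1(3) by blast
    moreover have "pi_eq t (- b Y C) (- b Z C)" using row[OF that] by (rule pi_eq_neg)
    moreover have "pi_eq t (b C Z) (- b Z C)" using skew that t2(1) by blast
    then have "pi_eq t (- b Z C) (b C Z)" by (rule pi_eq_sym)
    ultimately show ?thesis by (meson pi_eq_trans)
  qed
  define f where "f = (\<lambda>x. if x = Y then Z else if x = Z then Y else x)"
  have ff: "f (f x) = x" for x unfolding f_def by auto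
  have bij: "bij_betw f (S - {X, Y}) (S - {X, Z})"
  proof (rule bij_betw_byWitness[where f' = f])
    show "\<forall>a\<in>S - {X, Y}. f (f a) = a" using ff by blast
    show "\<forall>a\<in>S - {X, Z}. f (f a) = a" using ff by blast
    show "f ` (S - {X, Y}) \<subseteq> S - {X, Z}" unfolding f_def using t1 t2 YZ by auto
    show "f ` (S - {X, Z}) \<subseteq> S - {X, Y}" unfolding f_def using t1 t2 YZ by auto
  qed
  have fs: "f s = s" unfolding f_def using t1 t2 by auto
  have lab: "\<forall>A\<in>S - {X, Y} - {s}. l (f A) = l A" unfolding f_def using lYZ by auto
  have pb: "\<forall>A\<in>S - {X, Y}. \<forall>B\<in>S - {X, Y}. pi_eq t (b (f A) (f B)) (b A B)"
  proof (intro ballI)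
    fix A B assume A: "A \<in> S - {X, Y}" and B: "B \<in> S - {X, Y}"
    show "pi_eq t (b (f A) (f B)) (b A B)"
    proof (cases "A = Z")
      case True
      note AZ = True
      show ?thesis
      proof (cases "B = Z")
        case True
        have "f A = Y" "f B = Y" unfolding f_def using AZ True YZ by auto
        moreover have "pi_eq t (b Y Y) 0" using diag t1(3) by blast
        moreover have "pi_eq t (b Z Z) 0" using diag t2(1) by blast
        then have "pi_eq t 0 (b Z Z)" by (rule pi_eq_sym)
        ultimately show ?thesis using AZ True pi_eq_trans by metis
      next
        case False
        have "f A = Y" "f B = B" unfolding f_def using AZ False B YZ by auto
        then show ?thesis using row[of B] B AZ by simp
      qed
    next
      case False
      note AZ = False
      have fA: "f A = A" unfolding f_def using AZ A by auto
      show ?thesis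
      proof (cases "B = Z")
        case True
        have "f B = Y" unfolding f_def using True YZ by auto
        then show ?thesis using col[of A] A True fA by simp
      next
        case False
        have "f B = B" unfolding f_def using False B by auto
        then show ?thesis using fA pi_eq_refl by simp
      qed
    qed
  qed
  show ?thesis using bij fs lab pb by (rule isoI)
qed


lemma conf_22:
  assumes inv: "\<And>a. t (t a) = a" and P: "is_apairing t (S, s, l, b)"
    and h1: "twins t (S, s, l, b) A B" and h2: "twins t (S, s, l, b) C D"
  shows "\<exists>Q1 Q2. (apairing_move t)\<^sup>*\<^sup>* (S - {A, B}, s, l, b) Q1 \<and>
    (apairing_move t)\<^sup>*\<^sup>* (S - {C, D}, s, l, b) Q2 \<and> apairing_iso t Q1 Q2"
proof -
  have t1: "A \<in> S" "B \<in> S" "A \<noteq> B" using h1 by simp_all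
  have t2: "C \<in> S" "D \<in> S" "C \<noteq> D" using h2 by simp_all
  have s1: "twins t (S, s, l, b) B A" using twins_sym[OF inv h1] .
  have s2: "twins t (S, s, l, b) D C" using twins_sym[OF inv h2] .
  consider "{A, B} = {C, D}" | "{A, B} \<inter> {C, D} = {}" | "{A, B} \<noteq> {C, D} \<and> {A, B} \<inter> {C, D} \<noteq> {}"
    by blast
  then show ?thesis
  proof cases
    case 1
    have e: "S - {C, D} = S - {A, B}" using 1 by simp
    show ?thesis unfolding e using iso_refl[of t "(S - {A, B}, s, l, b)"] by blast
  next
    case 2
    have m1: "apairing_move t (S - {A, B}, s, l, b) (S - {A, B} - {C, D}, s, l, b)"
      by (rule m2I'[OF h2]) (use t2 2 in auto)
    have m2: "apairing_move t (S - {C, D}, s, l, b) (S - {A, B} - {C, D}, s, l, b)"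
      by (rule m2I'[OF h1]) (use t1 2 in auto)
    show ?thesis
      by (intro exI[of _ "(S - {A, B} - {C, D}, s, l, b)"] conjI r_into_rtranclp m1 m2 iso_refl)
  next
    case 3
    have "\<exists>X Y Z. twins t (S, s, l, b) X Y \<and> twins t (S, s, l, b) X Z \<and> Y \<noteq> Z \<and>
      {A, B} = {X, Y} \<and> {C, D} = {X, Z}"
    proof -
      consider "A = C" | "A = D" | "B = C" | "B = D" using 3 by blast
      then show ?thesis
      proof cases
        case 1
        then have "B \<noteq> D" using 3 by auto
        then show ?thesis using h1 h2 1 by (intro exI[of _ A] exI[of _ B] exI[of _ D]) (simp del: twins.simps)
      next
        case 2
        then have "B \<noteq> C" using 3 by auto
        then show ?thesis using h1 s2 2 by (intro exI[of _ A] exI[of _ B] exI[of _ C]) (auto simp del: twins.simps)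
      next
        case 3
        then have "A \<noteq> D" using \<open>{A, B} \<noteq> {C, D} \<and> {A, B} \<inter> {C, D} \<noteq> {}\<close> by auto
        then show ?thesis using s1 h2 3 by (intro exI[of _ B] exI[of _ A] exI[of _ D]) (auto simp del: twins.simps)
      next
        case 4
        then have "A \<noteq> C" using \<open>{A, B} \<noteq> {C, D} \<and> {A, B} \<inter> {C, D} \<noteq> {}\<close> by auto
        then show ?thesis using s1 s2 4 by (intro exI[of _ B] exI[of _ A] exI[of _ C]) (auto simp del: twins.simps)
      qed
    qed
    then obtain X Y Z where xyz: "twins t (S, s, l, b) X Y" "twins t (S, s, l, b) X Z" "Y \<noteq> Z"
      "{A, B} = {X, Y}" "{C, D} = {X, Z}" by blast
    have "apairing_iso t (S - {X, Y}, s, l, b) (S - {X, Z}, s, l, b)"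
      using swap_iso[OF inv P xyz(1,2,3)] .
    then show ?thesis unfolding xyz(4,5) by blast
  qed
qed

lemma same_to_iso:
  "\<exists>Q. (apairing_move t)\<^sup>*\<^sup>* X Q \<and> (apairing_move t)\<^sup>*\<^sup>* Y Q \<Longrightarrow>
   \<exists>Q1 Q2. (apairing_move t)\<^sup>*\<^sup>* X Q1 \<and> (apairing_move t)\<^sup>*\<^sup>* Y Q2 \<and> apairing_iso t Q1 Q2"
  using iso_refl by blast

lemma local_conf:
  assumes inv: "\<And>a. t (t a) = a" and P: "is_apairing t P"
    and m1: "apairing_move t P P1" and m2: "apairing_move t P P2"
  shows "\<exists>Q1 Q2. (apairing_move t)\<^sup>*\<^sup>* P1 Q1 \<and> (apairing_move t)\<^sup>*\<^sup>* P2 Q2 \<and> apairing_iso t Q1 Q2"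
proof -
  obtain S s l b where Pe: "P = (S, s, l, b)" by (cases P)
  have m1': "apairing_move t (S, s, l, b) P1" using m1 Pe by simp
  have m2': "apairing_move t (S, s, l, b) P2" using m2 Pe by simp
  have P': "is_apairing t (S, s, l, b)" using P Pe by simp
  from m1' show ?thesis
  proof (cases rule: move_cases)
    case (1 A)
    from m2' show ?thesis
    proof (cases rule: move_cases)
      case (1 A')
      show ?thesis unfolding \<open>P1 = _\<close> \<open>P2 = _\<close>
        by (rule same_to_iso, rule conf_11) fact+
    next
      case (2 B C)
      show ?thesis unfolding \<open>P1 = _\<close> \<open>P2 = _\<close>
        by (rule same_to_iso, rule conf_12) fact+
    qed
  next
    case (2 A B)
    from m2' show ?thesis
    proof (cases rule: move_cases)
      case (1 A')
      have "\<exists>Q. (apairing_move t)\<^sup>*\<^sup>* (S - {A'}, s, l, b) Q \<and> (apairing_move t)\<^sup>*\<^sup>* (S - {A, B}, s, l, b) Q"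
        by (rule conf_12) fact+
      then have "\<exists>Q. (apairing_move t)\<^sup>*\<^sup>* P1 Q \<and> (apairing_move t)\<^sup>*\<^sup>* P2 Q"
        unfolding \<open>P1 = _\<close> \<open>P2 = _\<close> by blast
      then show ?thesis by (rule same_to_iso)
    next
      case (2 C D)
      show ?thesis unfolding \<open>P1 = _\<close> \<open>P2 = _\<close>
        by (rule conf_22[OF inv P']) fact+
    qed
  qed
qed

section \<open>Uniqueness of the primitive reduct\<close>

lemma prim_stuck:
  assumes "(apairing_move t)\<^sup>*\<^sup>* P Q" "primitive t P"
  shows "Q = P"
  using assms(1)
proof (cases rule: converse_rtranclpE)
  case base then show ?thesis by simp
next
  case (step y) then show ?thesis using assms(2) primitive_iff by blast
qed

lemma step_out:
  assumes "(apairing_move t)\<^sup>*\<^sup>* P Q" "primitive t Q" "\<not> primitive t P"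
  obtains P1 where "apairing_move t P P1" "(apairing_move t)\<^sup>*\<^sup>* P1 Q"
  using assms(1)
proof (cases rule: converse_rtranclpE)
  case base then show ?thesis using assms(2,3) by simp
next
  case (step y) then show ?thesis using that by blast
qed

lemma unique_prim:
  assumes inv: "\<And>a. t (t a) = a"
  shows "is_apairing t P \<Longrightarrow> (apairing_move t)\<^sup>*\<^sup>* P Q1 \<Longrightarrow> (apairing_move t)\<^sup>*\<^sup>* P Q2 \<Longrightarrow>
    primitive t Q1 \<Longrightarrow> primitive t Q2 \<Longrightarrow> apairing_iso t Q1 Q2"
proof (induction "card (fst P)" arbitrary: P Q1 Q2 rule: less_induct)
  case less
  note ap = less.prems(1)
  show ?case
  proof (cases "primitive t P")
    case True
    have "Q1 = P" using prim_stuck less.prems(2) True by blast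
    moreover have "Q2 = P" using prim_stuck less.prems(3) True by blast
    ultimately show ?thesis using iso_refl by simp
  next
    case False
    obtain P1 where p1: "apairing_move t P P1" "(apairing_move t)\<^sup>*\<^sup>* P1 Q1"
      using step_out[OF less.prems(2) less.prems(4) False] by blast
    obtain P2 where p2: "apairing_move t P P2" "(apairing_move t)\<^sup>*\<^sup>* P2 Q2"
      using step_out[OF less.prems(3) less.prems(5) False] by blast
    have ap1: "is_apairing t P1" "card (fst P1) < card (fst P)" using move_apairing[OF ap p1(1)] by auto
    have ap2: "is_apairing t P2" "card (fst P2) < card (fst P)" using move_apairing[OF ap p2(1)] by auto
    obtain R1 R2 where r: "(apairing_move t)\<^sup>*\<^sup>* P1 R1" "(apairing_move t)\<^sup>*\<^sup>* P2 R2" "apairing_iso t R1 R2"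
      using local_conf[OF inv ap p1(1) p2(1)] by blast
    have apR1: "is_apairing t R1" using moves_apairing r(1) ap1(1) by blast
    have apR2: "is_apairing t R2" using moves_apairing r(2) ap2(1) by blast
    obtain N where n: "(apairing_move t)\<^sup>*\<^sup>* R1 N" "primitive t N"
      using exists_primitive[OF apR1] by blast
    have apN: "is_apairing t N" using moves_apairing n(1) apR1 by blast
    have P1N: "(apairing_move t)\<^sup>*\<^sup>* P1 N" using r(1) n(1) by (rule rtranclp_trans)
    have iso1: "apairing_iso t Q1 N"
      using less.hyps[OF ap1(2) ap1(1) p1(2) P1N less.prems(4) n(2)] .
    obtain N' where n': "(apairing_move t)\<^sup>*\<^sup>* R2 N'" "apairing_iso t N N'"
      using iso_moves[OF n(1) apR1 r(3)] by blast
    have apN': "is_apairing t N'" using moves_apairing n'(1) apR2 by blast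
    have primN': "primitive t N'" using iso_primitive[OF apN apN' n'(2) n(2)] .
    have P2N: "(apairing_move t)\<^sup>*\<^sup>* P2 N'" using r(2) n'(1) by (rule rtranclp_trans)
    have iso2: "apairing_iso t Q2 N'"
      using less.hyps[OF ap2(2) ap2(1) p2(2) P2N less.prems(5) primN'] .
    have apQ1: "is_apairing t Q1" using moves_apairing less.prems(2) ap by blast
    have apQ2: "is_apairing t Q2" using moves_apairing less.prems(3) ap by blast
    have iso3: "apairing_iso t N' Q2" using iso_sym[OF apQ2 iso2] .
    have "apairing_iso t Q1 N'" using iso_trans[OF apQ1 iso1 n'(2)] .
    then show ?thesis using iso_trans[OF apQ1 _ iso3] by blast
  qed
qed

lemma homol_main:
  assumes inv: "\<And>a. t (t a) = a"
    and h: "homologous t P Q" and ap: "is_apairing t P"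
  shows "\<forall>N N'. (apairing_move t)\<^sup>*\<^sup>* P N \<and> primitive t N \<and> (apairing_move t)\<^sup>*\<^sup>* Q N' \<and> primitive t N'
    \<longrightarrow> apairing_iso t N N'"
  using h[unfolded homologous_def]
proof (induction rule: rtranclp_induct)
  case base
  then show ?case using unique_prim[OF inv ap] by blast
next
  case (step Q Q')
  show ?case
  proof (intro allI impI, elim conjE)
    fix N N'' assume N: "(apairing_move t)\<^sup>*\<^sup>* P N" "primitive t N"
      and N'': "(apairing_move t)\<^sup>*\<^sup>* Q' N''" "primitive t N''"
    have apQ: "is_apairing t Q" and apQ': "is_apairing t Q'"
      using step.hyps(2) unfolding homology_step_def by blast+
    have cases: "apairing_move t Q Q' \<or> apairing_move t Q' Q \<or> apairing_iso t Q Q'"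
      using step.hyps(2) unfolding homology_step_def by blast
    obtain M where M: "(apairing_move t)\<^sup>*\<^sup>* Q M" "primitive t M"
      using exists_primitive[OF apQ] by blast
    have apN: "is_apairing t N" using moves_apairing N(1) ap by blast
    have apM: "is_apairing t M" using moves_apairing M(1) apQ by blast
    have isoNM: "apairing_iso t N M" using step.IH N M by blast
    have "apairing_iso t M N''"
    proof -
      consider "apairing_move t Q Q'" | "apairing_move t Q' Q" | "apairing_iso t Q Q'"
        using cases by blast
      then show ?thesis
      proof cases
        case 1
        have "(apairing_move t)\<^sup>*\<^sup>* Q N''" using 1 N''(1) by (rule converse_rtranclp_into_rtranclp)
        then show ?thesis using unique_prim[OF inv apQ M(1) _ M(2) N''(2)] by blast
      next
        case 2
        have "(apairing_move t)\<^sup>*\<^sup>* Q' M" using 2 M(1) by (rule converse_rtranclp_into_rtranclp)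
        then show ?thesis using unique_prim[OF inv apQ' _ N''(1) M(2) N''(2)] by blast
      next
        case 3
        obtain M' where M': "(apairing_move t)\<^sup>*\<^sup>* Q' M'" "apairing_iso t M M'"
          using iso_moves[OF M(1) apQ 3] by blast
        have apM': "is_apairing t M'" using moves_apairing M'(1) apQ' by blast
        have pM': "primitive t M'" using iso_primitive[OF apM apM' M'(2) M(2)] .
        have "apairing_iso t M' N''" using unique_prim[OF inv apQ' M'(1) N''(1) pM' N''(2)] .
        then show ?thesis using iso_trans[OF apM M'(2)] by blast
      qed
    qed
    then show "apairing_iso t N N''" using iso_trans[OF apN isoNM] by blast
  qed
qed

theorem lemma7p1:
  fixes \<tau> :: "'a \<Rightarrow> 'a"
  assumes "\<And>a. \<tau> (\<tau> a) = a"
  shows "(\<forall>P :: ('x, 'a) apairing. is_apairing \<tau> P \<longrightarrow>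
            (\<exists>Q. (apairing_move \<tau>)\<^sup>*\<^sup>* P Q \<and> primitive \<tau> Q)) \<and>
         (infinite (UNIV :: 'x set) \<longrightarrow>
           (\<forall>P Q :: ('x, 'a) apairing. is_apairing \<tau> P \<and> is_apairing \<tau> Q \<and>
              primitive \<tau> P \<and> primitive \<tau> Q \<and> homologous \<tau> P Q \<longrightarrow> apairing_iso \<tau> P Q))"
proof (intro conjI allI impI)
  fix P :: "('x, 'a) apairing"
  assume "is_apairing \<tau> P"
  then show "\<exists>Q. (apairing_move \<tau>)\<^sup>*\<^sup>* P Q \<and> primitive \<tau> Q" by (rule exists_primitive)
next
  fix P Q :: "('x, 'a) apairing"
  assume h: "is_apairing \<tau> P \<and> is_apairing \<tau> Q \<and> primitive \<tau> P \<and> primitive \<tau> Q \<and> homologous \<tau> P Q"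
  have "\<forall>N N'. (apairing_move \<tau>)\<^sup>*\<^sup>* P N \<and> primitive \<tau> N \<and> (apairing_move \<tau>)\<^sup>*\<^sup>* Q N' \<and> primitive \<tau> N'
    \<longrightarrow> apairing_iso \<tau> N N'"
    using homol_main[OF assms] h by blast
  then show "apairing_iso \<tau> P Q" using h by blast
qed

end
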